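(* Let $\mathbf A$ be an interior $r\ell u$-groupoid, $\mathbf B$ a partial subalgebra of $\mathbf A$, and let $(eq)$ be any one of the equations $(\mathsf e),(\mathsf c),(\mathsf i),(!\mathsf c),(!\mathsf e),(!\mathsf i),(!\mathsf a1),(!\mathsf a2)$. If $(eq)$ holds in $\mathbf A$, then it also holds in $\mathbf F^+_{\mathbf A,\mathbf B}$. (The same holds for an interior $r\ell uz$-groupoid $\mathbf A$, with $\mathbf F_{\mathbf A,\mathbf B}$ regarded as an enriched $ruz$-frame for any choice of $\epsilon\in T_B$; the listed equations do not involve $0$.)
   Context: An $r\ell u$-groupoid is an algebra $(A,\wedge,\vee,\cdot,\backslash,/,1)$ with $(A,\wedge,\vee)$ a lattice (order $\le$), $(A,\cdot,1)$ a unital groupoid (binary operation, not necessarily associative, with two-sided unit $1$), and $x\cdot y\le z\iff y\le x\backslash z\iff x\le z/y$; an $r\ell uz$-groupoid additionally has an arbitrary constant $0$. An interior one has a unary $!$ with $1\le !1$, $!x\cdot!y\le !(x\cdot y)$, $!x\le x$, $!x\le !!x$, $x\le y\Rightarrow !x\le !y$. Equations: $(\mathsf e)$ $x\cdot y\le y\cdot x$; $(\mathsf c)$ $x\le x\cdot x$; $(\mathsf i)$ $x\le 1$; $(!\mathsf i)$ $!x\le 1$; $(!\mathsf c)$ $!x\le !x\cdot !x$; $(!\mathsf e)$ $!x\cdot y=y\cdot !x$; $(!\mathsf a1)$ $!x\cdot(y\cdot z)=(!x\cdot y)\cdot z$; $(!\mathsf a2)$ $x\cdot(y\cdot !z)=(x\cdot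 y)\cdot !z$. A partial subalgebra $\mathbf B$ of $\mathbf A$ is a subset $B$ with $f^{\mathbf B}(\vec b)=f^{\mathbf A}(\vec b)$ if this lies in $B$, undefined otherwise. Enriched $ru$-frame: $(G,T,N,K)$ with $(G,\cdot,\varepsilon)$ a unital groupoid, $T$ a set, $N\subseteq G\times T$ nuclear (for all $x,y\in G,z\in T$ there are $x\backslash\!\!\backslash z, z/\!\!/y\in T$ with $x\cdot y\,N\,z\iff y\,N\,x\backslash\!\!\backslash z\iff x\,N\,z/\!\!/y$), $K$ a sub-unital-groupoid of $G$; an enriched $ruz$-frame additionally has $\epsilon\in T$. $X^{\rhd}=\{t\mid\forall x\in X\,xNt\}$, $Y^{\lhd}=\{g\mid\forall y\in Y\,gNy\}$, $\gamma_N(X)=X^{\rhd\lhd}$. $\mathbf F^+$: universe the closed sets ($\gamma_N(X)=X$), $X\wedge Y=X\cap Y$, $X\vee Y=\gamma_N(X\cup Y)$, $X\cdot Y=\gamma_N(X\circ Y)$ with $X\circ Y=\{x\cdot y\}$, $X\backslash Y=\{z\mid X\circ\{z\}\subseteq Y\}$, $Y/X=\{z\mid \{z\}\circ X\subseteq Y\}$, $!X=\gamma_N(X\cap K)$, unit $\gamma_N(\{\varepsilon\})$, and in the $ruz$ case zero $\{\epsilon\}^{\lhd}$. $\mathbf F_{\mathbf A,\mathbf B}=(G_B,T_B,N_B,K_B)$: $G_B$ the sub-unital-groupoid of $(A,\cdot,1)$ generated by $B$; $U_{G_B}$ the unary linear polynomials over $G_B$ (maps given by a groupoid term with one variable occurring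 exactly once and other leaves in $G_B$, including $\mathrm{id}$); $T_B=U_{G_B}\times B$; $x\,N_B\,(u,b)$ iff $u(x)\le^{\mathbf A}b$; $K_B$ the sub-unital-groupoid generated by $\{!^{\mathbf A}b\mid b\in B,\ !^{\mathbf A}b\in B\}$. *)

theory Defs
  imports Main
begin

record 'a irlu =
  meet :: "'a \<Rightarrow> 'a \<Rightarrow> 'a"
  join :: "'a \<Rightarrow> 'a \<Rightarrow> 'a"
  mul  :: "'a \<Rightarrow> 'a \<Rightarrow> 'a"
  ldiv :: "'a \<Rightarrow> 'a \<Rightarrow> 'a"
  rdiv :: "'a \<Rightarrow> 'a \<Rightarrow> 'a"
  one  :: "'a"
  bang :: "'a \<Rightarrow> 'a"

definition alg_le :: "'a irlu \<Rightarrow> 'a \<Rightarrow> 'a \<Rightarrow> bool" where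
  "alg_le A x y \<longleftrightarrow> meet A x y = x"

definition interior_rlu :: "'a irlu \<Rightarrow> bool" where
  "interior_rlu A \<longleftrightarrow>
     \<comment> \<open>lattice\<close>
     (\<forall>x y. meet A x y = meet A y x) \<and> (\<forall>x y. join A x y = join A y x) \<and>
     (\<forall>x y z. meet A x (meet A y z) = meet A (meet A x y) z) \<and>
     (\<forall>x y z. join A x (join A y z) = join A (join A x y) z) \<and>
     (\<forall>x y. meet A x (join A x y) = x) \<and> (\<forall>x y. join A x (meet A x y) = x) \<and>
     \<comment> \<open>unital groupoid\<close>
     (\<forall>x. mul A (one A) x = x) \<and> (\<forall>x. mul A x (one A) = x) \<and>
     \<comment> \<open>residuation\<close>
     (\<forall>x y z. alg_le A (mul A x y) z \<longleftrightarrow> alg_le A y (ldiv A x z)) \<and>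
     (\<forall>x y z. alg_le A (mul A x y) z \<longleftrightarrow> alg_le A x (rdiv A z y)) \<and>
     \<comment> \<open>interior operator\<close>
     alg_le A (one A) (bang A (one A)) \<and>
     (\<forall>x y. alg_le A (mul A (bang A x) (bang A y)) (bang A (mul A x y))) \<and>
     (\<forall>x. alg_le A (bang A x) x) \<and>
     (\<forall>x. alg_le A (bang A x) (bang A (bang A x))) \<and>
     (\<forall>x y. alg_le A x y \<longrightarrow> alg_le A (bang A x) (bang A y))"

datatype eqn = Eq_e | Eq_c | Eq_i | Eq_bang_c | Eq_bang_e | Eq_bang_i | Eq_bang_a1 | Eq_bang_a2

fun eq_holds :: "eqn \<Rightarrow> 'x set \<Rightarrow> ('x \<Rightarrow> 'x \<Rightarrow> bool) \<Rightarrow> ('x \<Rightarrow> 'x \<Rightarrow> 'x) \<Rightarrow> 'x \<Rightarrow> ('x \<Rightarrow> 'x) \<Rightarrow> bool" where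
  "eq_holds Eq_e U le m e bg = (\<forall>x\<in>U. \<forall>y\<in>U. le (m x y) (m y x))"
| "eq_holds Eq_c U le m e bg = (\<forall>x\<in>U. le x (m x x))"
| "eq_holds Eq_i U le m e bg = (\<forall>x\<in>U. le x e)"
| "eq_holds Eq_bang_i U le m e bg = (\<forall>x\<in>U. le (bg x) e)"
| "eq_holds Eq_bang_c U le m e bg = (\<forall>x\<in>U. le (bg x) (m (bg x) (bg x)))"
| "eq_holds Eq_bang_e U le m e bg = (\<forall>x\<in>U. \<forall>y\<in>U. m (bg x) y = m y (bg x))"
| "eq_holds Eq_bang_a1 U le m e bg =
     (\<forall>x\<in>U. \<forall>y\<in>U. \<forall>z\<in>U. m (bg x) (m y z) = m (m (bg x) y) z)"
| "eq_holds Eq_bang_a2 U le m e bg =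
     (\<forall>x\<in>U. \<forall>y\<in>U. \<forall>z\<in>U. m x (m y (bg z)) = m (m x y) (bg z))"

section \<open>Complex algebra F^+ of an enriched frame (G,T,N,K) with groupoid (m, eps)\<close>

definition rhd :: "'t set \<Rightarrow> ('g \<Rightarrow> 't \<Rightarrow> bool) \<Rightarrow> 'g set \<Rightarrow> 't set" where
  "rhd T N X = {t \<in> T. \<forall>x\<in>X. N x t}"

definition lhd :: "'g set \<Rightarrow> ('g \<Rightarrow> 't \<Rightarrow> bool) \<Rightarrow> 't set \<Rightarrow> 'g set" where
  "lhd G N Y = {g \<in> G. \<forall>y\<in>Y. N g y}"

definition gamma :: "'g set \<Rightarrow> 't set \<Rightarrow> ('g \<Rightarrow> 't \<Rightarrow> bool) \<Rightarrow> 'g set \<Rightarrow> 'g set" where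
  "gamma G T N X = lhd G N (rhd T N X)"

definition Fclosed :: "'g set \<Rightarrow> 't set \<Rightarrow> ('g \<Rightarrow> 't \<Rightarrow> bool) \<Rightarrow> 'g set set" where
  "Fclosed G T N = {X. X \<subseteq> G \<and> gamma G T N X = X}"

definition Fmul :: "('g \<Rightarrow> 'g \<Rightarrow> 'g) \<Rightarrow> 'g set \<Rightarrow> 't set \<Rightarrow> ('g \<Rightarrow> 't \<Rightarrow> bool) \<Rightarrow> 'g set \<Rightarrow> 'g set \<Rightarrow> 'g set" where
  "Fmul m G T N X Y = gamma G T N {m x y | x y. x \<in> X \<and> y \<in> Y}"

definition Funit :: "'g \<Rightarrow> 'g set \<Rightarrow> 't set \<Rightarrow> ('g \<Rightarrow> 't \<Rightarrow> bool) \<Rightarrow> 'g set" where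
  "Funit eps G T N = gamma G T N {eps}"

definition Fbang :: "'g set \<Rightarrow> 'g set \<Rightarrow> 't set \<Rightarrow> ('g \<Rightarrow> 't \<Rightarrow> bool) \<Rightarrow> 'g set \<Rightarrow> 'g set" where
  "Fbang K G T N X = gamma G T N (X \<inter> K)"

section \<open>The frame F_{A,B}\<close>

inductive_set gen_sub :: "'a irlu \<Rightarrow> 'a set \<Rightarrow> 'a set" for A S where
  gen_base: "x \<in> S \<Longrightarrow> x \<in> gen_sub A S"
| gen_one: "one A \<in> gen_sub A S"
| gen_mul: "x \<in> gen_sub A S \<Longrightarrow> y \<in> gen_sub A S \<Longrightarrow> mul A x y \<in> gen_sub A S"

definition GB :: "'a irlu \<Rightarrow> 'a set \<Rightarrow> 'a set" where
  "GB A B = gen_sub A B"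

text \<open>Unary linear polynomials over a set G of constants: id, and g*u, u*g for g in G.
  (Every groupoid term with exactly one occurrence of the variable and other leaves
   in G_B evaluates to such a map, since G_B is closed under product and contains 1.)\<close>
inductive_set lin_polys :: "'a irlu \<Rightarrow> 'a set \<Rightarrow> ('a \<Rightarrow> 'a) set" for A G where
  lp_id: "(\<lambda>x. x) \<in> lin_polys A G"
| lp_left: "g \<in> G \<Longrightarrow> u \<in> lin_polys A G \<Longrightarrow> (\<lambda>x. mul A g (u x)) \<in> lin_polys A G"
| lp_right: "g \<in> G \<Longrightarrow> u \<in> lin_polys A G \<Longrightarrow> (\<lambda>x. mul A (u x) g) \<in> lin_polys A G"

definition TB :: "'a irlu \<Rightarrow> 'a set \<Rightarrow> (('a \<Rightarrow> 'a) \<times> 'a) set" where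
  "TB A B = lin_polys A (GB A B) \<times> B"

definition NB :: "'a irlu \<Rightarrow> 'a \<Rightarrow> ('a \<Rightarrow> 'a) \<times> 'a \<Rightarrow> bool" where
  "NB A x t \<longleftrightarrow> alg_le A (fst t x) (snd t)"

definition KB :: "'a irlu \<Rightarrow> 'a set \<Rightarrow> 'a set" where
  "KB A B = gen_sub A {bang A b | b. b \<in> B \<and> bang A b \<in> B}"

end

theory Submission
  imports Defs
begin

abbreviation smul :: "('g \<Rightarrow> 'g \<Rightarrow> 'g) \<Rightarrow> 'g set \<Rightarrow> 'g set \<Rightarrow> 'g set" where
  "smul m X Y \<equiv> {m x y | x y. x \<in> X \<and> y \<in> Y}"

lemma le_refl: "interior_rlu A \<Longrightarrow> alg_le A x x"
  unfolding interior_rlu_def alg_le_def by metis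

lemma le_trans: "interior_rlu A \<Longrightarrow> alg_le A x y \<Longrightarrow> alg_le A y z \<Longrightarrow> alg_le A x z"
  unfolding interior_rlu_def alg_le_def by metis

lemma le_antisym: "interior_rlu A \<Longrightarrow> alg_le A x y \<Longrightarrow> alg_le A y x \<Longrightarrow> x = y"
  unfolding interior_rlu_def alg_le_def by metis

lemma resl: "interior_rlu A \<Longrightarrow> alg_le A (mul A x y) z \<longleftrightarrow> alg_le A y (ldiv A x z)"
  unfolding interior_rlu_def by blast

lemma resr: "interior_rlu A \<Longrightarrow> alg_le A (mul A x y) z \<longleftrightarrow> alg_le A x (rdiv A z y)"
  unfolding interior_rlu_def by blast

lemma mul_mono_r: assumes A: "interior_rlu A" and xy: "alg_le A x y"
  shows "alg_le A (mul A g x) (mul A g y)"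
proof -
  have "alg_le A y (ldiv A g (mul A g y))" using resl[OF A, of g y "mul A g y"] le_refl[OF A, of "mul A g y"] by simp
  then have "alg_le A x (ldiv A g (mul A g y))" using le_trans[OF A xy] by simp
  then show ?thesis using resl[OF A, of g x "mul A g y"] by simp
qed

lemma mul_mono_l: assumes A: "interior_rlu A" and xy: "alg_le A x y"
  shows "alg_le A (mul A x g) (mul A y g)"
proof -
  have "alg_le A y (rdiv A (mul A y g) g)" using resr[OF A, of y g "mul A y g"] le_refl[OF A, of "mul A y g"] by simp
  then have "alg_le A x (rdiv A (mul A y g) g)" using le_trans[OF A xy] by simp
  then show ?thesis using resr[OF A, of x g "mul A y g"] by simp
qed

lemma lin_mono: "u \<in> lin_polys A G \<Longrightarrow> interior_rlu A \<Longrightarrow> alg_le A x y \<Longrightarrow> alg_le A (u x) (u y)"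
proof (induction u rule: lin_polys.induct)
  case lp_id
  then show ?case by simp
next
  case (lp_left g u)
  then show ?case using mul_mono_r[OF lp_left.prems(1)] by simp
next
  case (lp_right g u)
  then show ?case using mul_mono_l[OF lp_right.prems(1)] by simp
qed

lemma lin_comp_r: "u \<in> lin_polys A G \<Longrightarrow> y \<in> G \<Longrightarrow> (\<lambda>x. u (mul A x y)) \<in> lin_polys A G"
proof (induction u rule: lin_polys.induct)
  case lp_id
  then show ?case using lin_polys.lp_right[OF lp_id.prems lin_polys.lp_id] by simp
next
  case (lp_left g u)
  show ?case using lin_polys.lp_left[OF lp_left.hyps(1) lp_left.IH[OF lp_left.prems]] by simp
next
  case (lp_right g u)
  show ?case using lin_polys.lp_right[OF lp_right.hyps(1) lp_right.IH[OF lp_right.prems]] by simp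
qed

lemma lin_comp_l: "u \<in> lin_polys A G \<Longrightarrow> y \<in> G \<Longrightarrow> (\<lambda>x. u (mul A y x)) \<in> lin_polys A G"
proof (induction u rule: lin_polys.induct)
  case lp_id
  then show ?case using lin_polys.lp_left[OF lp_id.prems lin_polys.lp_id] by simp
next
  case (lp_left g u)
  show ?case using lin_polys.lp_left[OF lp_left.hyps(1) lp_left.IH[OF lp_left.prems]] by simp
next
  case (lp_right g u)
  show ?case using lin_polys.lp_right[OF lp_right.hyps(1) lp_right.IH[OF lp_right.prems]] by simp
qed

lemma gamma_sub: "gamma G T N X \<subseteq> G"
  unfolding gamma_def lhd_def by auto

lemma gamma_ext: "X \<subseteq> G \<Longrightarrow> X \<subseteq> gamma G T N X"
  unfolding gamma_def lhd_def rhd_def by auto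

lemma gamma_le: assumes "S \<subseteq> gamma G T N Y" shows "gamma G T N S \<subseteq> gamma G T N Y"
proof
  fix z assume z: "z \<in> gamma G T N S"
  have "rhd T N Y \<subseteq> rhd T N S"
  proof
    fix t assume t: "t \<in> rhd T N Y"
    have "\<forall>x\<in>S. N x t"
    proof
      fix x assume "x \<in> S"
      then have "x \<in> gamma G T N Y" using assms by blast
      then show "N x t" using t unfolding gamma_def lhd_def by blast
    qed
    then show "t \<in> rhd T N S" using t unfolding rhd_def by blast
  qed
  then show "z \<in> gamma G T N Y" using z unfolding gamma_def lhd_def by blast
qed

lemma gamma_mono: assumes "X \<subseteq> Y" "Y \<subseteq> G" shows "gamma G T N X \<subseteq> gamma G T N Y"
proof (rule gamma_le)
  show "X \<subseteq> gamma G T N Y" using assms(1) gamma_ext[OF assms(2), of T N] by (rule order_trans)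
qed

lemma G_mul: "x \<in> GB A B \<Longrightarrow> y \<in> GB A B \<Longrightarrow> mul A x y \<in> GB A B"
  unfolding GB_def by (rule gen_mul)

lemma G_one: "one A \<in> GB A B"
  unfolding GB_def by (rule gen_one)

lemma smul_sub: assumes "X \<subseteq> GB A B" "Y \<subseteq> GB A B" shows "smul (mul A) X Y \<subseteq> GB A B"
proof
  fix z assume "z \<in> smul (mul A) X Y"
  then obtain x y where "z = mul A x y" "x \<in> X" "y \<in> Y" by blast
  then show "z \<in> GB A B" using G_mul[of x A B y] assms by blast
qed

lemma down_closed:
  assumes A: "interior_rlu A" and xG: "x \<in> GB A B" and y: "y \<in> gamma (GB A B) (TB A B) (NB A) S"
    and xy: "alg_le A x y"
  shows "x \<in> gamma (GB A B) (TB A B) (NB A) S"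
proof -
  have "NB A x t" if t: "t \<in> rhd (TB A B) (NB A) S" for t
  proof -
    obtain u b where ub: "t = (u, b)" by (cases t)
    have "u \<in> lin_polys A (GB A B)" using t ub unfolding rhd_def TB_def by auto
    then have 1: "alg_le A (u x) (u y)" using lin_mono[OF _ A xy] by blast
    have "NB A y t" using y t unfolding gamma_def lhd_def by blast
    then have "alg_le A (u y) b" using ub unfolding NB_def by simp
    then have "alg_le A (u x) b" using le_trans[OF A 1] by simp
    then show ?thesis using ub unfolding NB_def by simp
  qed
  then show ?thesis using xG unfolding gamma_def lhd_def by blast
qed

lemma gamma_mul_left:
  assumes "S \<subseteq> GB A B" "Y \<subseteq> GB A B"
  shows "gamma (GB A B) (TB A B) (NB A) (smul (mul A) (gamma (GB A B) (TB A B) (NB A) S) Y)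
       = gamma (GB A B) (TB A B) (NB A) (smul (mul A) S Y)"
proof (rule subset_antisym)
  show "gamma (GB A B) (TB A B) (NB A) (smul (mul A) S Y)
      \<subseteq> gamma (GB A B) (TB A B) (NB A) (smul (mul A) (gamma (GB A B) (TB A B) (NB A) S) Y)"
  proof (rule gamma_mono)
    show "smul (mul A) S Y \<subseteq> smul (mul A) (gamma (GB A B) (TB A B) (NB A) S) Y"
      using gamma_ext[OF assms(1), of "TB A B" "NB A"] by blast
    show "smul (mul A) (gamma (GB A B) (TB A B) (NB A) S) Y \<subseteq> GB A B"
      by (rule smul_sub[OF gamma_sub assms(2)])
  qed
  show "gamma (GB A B) (TB A B) (NB A) (smul (mul A) (gamma (GB A B) (TB A B) (NB A) S) Y)
      \<subseteq> gamma (GB A B) (TB A B) (NB A) (smul (mul A) S Y)"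
  proof (rule gamma_le, rule subsetI)
    fix z assume "z \<in> smul (mul A) (gamma (GB A B) (TB A B) (NB A) S) Y"
    then obtain s y where z: "z = mul A s y" and s: "s \<in> gamma (GB A B) (TB A B) (NB A) S"
      and y: "y \<in> Y" by blast
    have sG: "s \<in> GB A B" by (rule subsetD[OF gamma_sub s])
    have yG: "y \<in> GB A B" using y assms(2) by blast
    show "z \<in> gamma (GB A B) (TB A B) (NB A) (smul (mul A) S Y)"
      unfolding gamma_def lhd_def
    proof (safe)
      show "z \<in> GB A B" using z G_mul[OF sG yG] G_mul[OF yG sG] by simp
    next
      fix u b assume t: "(u, b) \<in> rhd (TB A B) (NB A) (smul (mul A) S Y)"
      have "(u,b) \<in> TB A B" using t unfolding rhd_def by blast
      then have uL: "u \<in> lin_polys A (GB A B)" and bB: "b \<in> B" unfolding TB_def by auto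
      have tt: "\<forall>w\<in>{mul A a c | a c. a \<in> S \<and> c \<in> Y}. NB A w (u, b)"
        using t unfolding rhd_def by blast
      have "\<forall>x\<in>S. NB A x (\<lambda>x. u (mul A x y), b)"
      proof
        fix x assume "x \<in> S"
        then have "mul A x y \<in> {mul A a c | a c. a \<in> S \<and> c \<in> Y}" using y by blast
        then have "NB A (mul A x y) (u, b)" using tt by blast
        then show "NB A x (\<lambda>x. u (mul A x y), b)" unfolding NB_def by simp
      qed
      moreover have "(\<lambda>x. u (mul A x y), b) \<in> TB A B"
        using lin_comp_r[OF uL yG] bB unfolding TB_def by simp
      ultimately have "(\<lambda>x. u (mul A x y), b) \<in> rhd (TB A B) (NB A) S"
        unfolding rhd_def by simp
      then have "NB A s (\<lambda>x. u (mul A x y), b)" using s unfolding gamma_def lhd_def by blast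
      then show "NB A z (u, b)" using z unfolding NB_def by simp
    qed
  qed
qed

lemma gamma_mul_right:
  assumes "S \<subseteq> GB A B" "Y \<subseteq> GB A B"
  shows "gamma (GB A B) (TB A B) (NB A) (smul (mul A) Y (gamma (GB A B) (TB A B) (NB A) S))
       = gamma (GB A B) (TB A B) (NB A) (smul (mul A) Y S)"
proof (rule subset_antisym)
  show "gamma (GB A B) (TB A B) (NB A) (smul (mul A) Y S)
      \<subseteq> gamma (GB A B) (TB A B) (NB A) (smul (mul A) Y (gamma (GB A B) (TB A B) (NB A) S))"
  proof (rule gamma_mono)
    show "smul (mul A) Y S \<subseteq> smul (mul A) Y (gamma (GB A B) (TB A B) (NB A) S)"
      using gamma_ext[OF assms(1), of "TB A B" "NB A"] by blast
    show "smul (mul A) Y (gamma (GB A B) (TB A B) (NB A) S) \<subseteq> GB A B"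
      by (rule smul_sub[OF assms(2) gamma_sub])
  qed
  show "gamma (GB A B) (TB A B) (NB A) (smul (mul A) Y (gamma (GB A B) (TB A B) (NB A) S))
      \<subseteq> gamma (GB A B) (TB A B) (NB A) (smul (mul A) Y S)"
  proof (rule gamma_le, rule subsetI)
    fix z assume "z \<in> smul (mul A) Y (gamma (GB A B) (TB A B) (NB A) S)"
    then obtain s y where z: "z = mul A y s" and s: "s \<in> gamma (GB A B) (TB A B) (NB A) S"
      and y: "y \<in> Y" by blast
    have sG: "s \<in> GB A B" by (rule subsetD[OF gamma_sub s])
    have yG: "y \<in> GB A B" using y assms(2) by blast
    show "z \<in> gamma (GB A B) (TB A B) (NB A) (smul (mul A) Y S)"
      unfolding gamma_def lhd_def
    proof (safe)
      show "z \<in> GB A B" using z G_mul[OF sG yG] G_mul[OF yG sG] by simp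
    next
      fix u b assume t: "(u, b) \<in> rhd (TB A B) (NB A) (smul (mul A) Y S)"
      have "(u,b) \<in> TB A B" using t unfolding rhd_def by blast
      then have uL: "u \<in> lin_polys A (GB A B)" and bB: "b \<in> B" unfolding TB_def by auto
      have tt: "\<forall>w\<in>{mul A a c | a c. a \<in> Y \<and> c \<in> S}. NB A w (u, b)"
        using t unfolding rhd_def by blast
      have "\<forall>x\<in>S. NB A x (\<lambda>x. u (mul A y x), b)"
      proof
        fix x assume "x \<in> S"
        then have "mul A y x \<in> {mul A a c | a c. a \<in> Y \<and> c \<in> S}" using y by blast
        then have "NB A (mul A y x) (u, b)" using tt by blast
        then show "NB A x (\<lambda>x. u (mul A y x), b)" unfolding NB_def by simp
      qed
      moreover have "(\<lambda>x. u (mul A y x), b) \<in> TB A B"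
        using lin_comp_l[OF uL yG] bB unfolding TB_def by simp
      ultimately have "(\<lambda>x. u (mul A y x), b) \<in> rhd (TB A B) (NB A) S"
        unfolding rhd_def by simp
      then have "NB A s (\<lambda>x. u (mul A y x), b)" using s unfolding gamma_def lhd_def by blast
      then show "NB A z (u, b)" using z unfolding NB_def by simp
    qed
  qed
qed

lemma K_fix: assumes A: "interior_rlu A" shows "k \<in> KB A B \<Longrightarrow> bang A k = k"
  unfolding KB_def
proof (induction k rule: gen_sub.induct)
  case (gen_base x)
  then obtain b where x: "x = bang A b" by blast
  have 1: "alg_le A (bang A x) x" and 2: "alg_le A x (bang A x)"
    using A x unfolding interior_rlu_def by auto
  show ?case using le_antisym[OF A 1 2] .
next
  case gen_one
  have 1: "alg_le A (bang A (one A)) (one A)" and 2: "alg_le A (one A) (bang A (one A))"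
    using A unfolding interior_rlu_def by auto
  show ?case using le_antisym[OF A 1 2] .
next
  case (gen_mul x y)
  have 1: "alg_le A (bang A (mul A x y)) (mul A x y)"
    using A unfolding interior_rlu_def by blast
  have "alg_le A (mul A (bang A x) (bang A y)) (bang A (mul A x y))"
    using A unfolding interior_rlu_def by blast
  then have 2: "alg_le A (mul A x y) (bang A (mul A x y))" using gen_mul.IH by simp
  show ?case using le_antisym[OF A 1 2] .
qed

theorem mainTheorem9:
  fixes A :: "'a irlu" and B :: "'a set" and q :: eqn
  assumes "interior_rlu A"
    and "eq_holds q UNIV (alg_le A) (mul A) (one A) (bang A)"
  shows "eq_holds q (Fclosed (GB A B) (TB A B) (NB A)) (\<subseteq>)
           (Fmul (mul A) (GB A B) (TB A B) (NB A))
           (Funit (one A) (GB A B) (TB A B) (NB A))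
           (Fbang (KB A B) (GB A B) (TB A B) (NB A))"
proof -
  note A = assms(1)
  note H = assms(2)
  define g where "g = gamma (GB A B) (TB A B) (NB A)"
  define K where "K = KB A B"
  have Cl: "X \<subseteq> GB A B" "g X = X" if "X \<in> Fclosed (GB A B) (TB A B) (NB A)" for X
    using that unfolding Fclosed_def g_def by auto
  have ext: "X \<subseteq> g X" if "X \<subseteq> GB A B" for X unfolding g_def by (rule gamma_ext[OF that])
  have gle: "g S \<subseteq> g Y" if "S \<subseteq> g Y" for S Y using that unfolding g_def by (rule gamma_le)
  have gsub: "g X \<subseteq> GB A B" for X unfolding g_def by (rule gamma_sub)
  have dc: "x \<in> g S" if "x \<in> GB A B" "y \<in> g S" "alg_le A x y" for x y S
    using down_closed[OF A that(1) that(2)[unfolded g_def] that(3)] unfolding g_def .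
  have ml: "g (smul (mul A) (g S) Y) = g (smul (mul A) S Y)" if "S \<subseteq> GB A B" "Y \<subseteq> GB A B" for S Y
    using gamma_mul_left[OF that] g_def by simp
  have mr: "g (smul (mul A) Y (g S)) = g (smul (mul A) Y S)" if "S \<subseteq> GB A B" "Y \<subseteq> GB A B" for S Y
    using gamma_mul_right[OF that] g_def by simp
  have kf: "bang A k = k" if "k \<in> K" for k using K_fix[OF A that[unfolded K_def]] .
  have ss: "smul (mul A) X Y \<subseteq> GB A B" if "X \<subseteq> GB A B" "Y \<subseteq> GB A B" for X Y
    using smul_sub[OF that] .
  have Fm: "Fmul (mul A) (GB A B) (TB A B) (NB A) X Y = g (smul (mul A) X Y)" for X Y
    unfolding Fmul_def g_def by simp
  have Fb: "Fbang (KB A B) (GB A B) (TB A B) (NB A) X = g (X \<inter> K)" for X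
    unfolding Fbang_def g_def K_def by simp
  have Fu: "Funit (one A) (GB A B) (TB A B) (NB A) = g {one A}"
    unfolding Funit_def g_def by simp
  have one_g: "one A \<in> g {one A}" using ext[of "{one A}"] G_one[of A B] by simp
  show ?thesis
  proof (cases q)
    case Eq_e
    show ?thesis unfolding Eq_e eq_holds.simps Fm
    proof (intro ballI)
      fix X Y assume X: "X \<in> Fclosed (GB A B) (TB A B) (NB A)" and Y: "Y \<in> Fclosed (GB A B) (TB A B) (NB A)"
      note XG = Cl(1)[OF X] and YG = Cl(1)[OF Y]
      show "g (smul (mul A) X Y) \<subseteq> g (smul (mul A) Y X)"
      proof (rule gle, rule subsetI)
        fix z assume "z \<in> smul (mul A) X Y"
        then obtain x y where z: "z = mul A x y" "x \<in> X" "y \<in> Y" by blast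
        have "mul A y x \<in> smul (mul A) Y X" using z(2,3) by blast
        then have m: "mul A y x \<in> g (smul (mul A) Y X)" using ext[OF ss[OF YG XG]] by (rule subsetD[rotated])
        have le: "alg_le A (mul A x y) (mul A y x)" using H Eq_e by simp
        have zG: "mul A x y \<in> GB A B" by (rule G_mul[OF subsetD[OF XG z(2)] subsetD[OF YG z(3)]])
        show "z \<in> g (smul (mul A) Y X)" unfolding z(1) by (rule dc[OF zG m le])
      qed
    qed
  next
    case Eq_c
    show ?thesis unfolding Eq_c eq_holds.simps Fm
    proof (intro ballI subsetI)
      fix X x assume X: "X \<in> Fclosed (GB A B) (TB A B) (NB A)" and x: "x \<in> X"
      note XG = Cl(1)[OF X]
      have "mul A x x \<in> smul (mul A) X X" using x by blast
      then have m: "mul A x x \<in> g (smul (mul A) X X)" using ext[OF ss[OF XG XG]] by (rule subsetD[rotated])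
      have le: "alg_le A x (mul A x x)" using H Eq_c by simp
      show "x \<in> g (smul (mul A) X X)" by (rule dc[OF subsetD[OF XG x] m le])
    qed
  next
    case Eq_i
    show ?thesis unfolding Eq_i eq_holds.simps Fu
    proof (intro ballI subsetI)
      fix X x assume X: "X \<in> Fclosed (GB A B) (TB A B) (NB A)" and x: "x \<in> X"
      note XG = Cl(1)[OF X]
      have le: "alg_le A x (one A)" using H Eq_i by simp
      show "x \<in> g {one A}" by (rule dc[OF subsetD[OF XG x] one_g le])
    qed
  next
    case Eq_bang_i
    show ?thesis unfolding Eq_bang_i eq_holds.simps Fu Fb
    proof (intro ballI gle subsetI)
      fix X x assume X: "X \<in> Fclosed (GB A B) (TB A B) (NB A)" and x: "x \<in> X \<inter> K"
      note XG = Cl(1)[OF X]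
      have xX: "x \<in> X" and xK: "x \<in> K" using x by auto
      have "alg_le A (bang A x) (one A)" using H Eq_bang_i by simp
      then have le: "alg_le A x (one A)" using kf[OF xK] by simp
      show "x \<in> g {one A}" by (rule dc[OF subsetD[OF XG xX] one_g le])
    qed
  next
    case Eq_bang_c
    show ?thesis unfolding Eq_bang_c eq_holds.simps Fm Fb
    proof (intro ballI gle subsetI)
      fix X x assume X: "X \<in> Fclosed (GB A B) (TB A B) (NB A)" and x: "x \<in> X \<inter> K"
      note XG = Cl(1)[OF X]
      have xX: "x \<in> X" and xK: "x \<in> K" using x by auto
      have IG: "X \<inter> K \<subseteq> GB A B" using XG by auto
      have xZ: "x \<in> g (X \<inter> K)" using ext[OF IG] x by (rule subsetD)
      have "mul A x x \<in> smul (mul A) (g (X \<inter> K)) (g (X \<inter> K))" using xZ by blast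
      then have m: "mul A x x \<in> g (smul (mul A) (g (X \<inter> K)) (g (X \<inter> K)))"
        using ext[OF ss[OF gsub gsub]] by (rule subsetD[rotated])
      have "alg_le A (bang A x) (mul A (bang A x) (bang A x))" using H Eq_bang_c by simp
      then have le: "alg_le A x (mul A x x)" using kf[OF xK] by simp
      show "x \<in> g (smul (mul A) (g (X \<inter> K)) (g (X \<inter> K)))" by (rule dc[OF subsetD[OF XG xX] m le])
    qed
  next
    case Eq_bang_e
    show ?thesis unfolding Eq_bang_e eq_holds.simps Fm Fb
    proof (intro ballI)
      fix X Y assume X: "X \<in> Fclosed (GB A B) (TB A B) (NB A)" and Y: "Y \<in> Fclosed (GB A B) (TB A B) (NB A)"
      note XG = Cl(1)[OF X] and YG = Cl(1)[OF Y]
      have IG: "X \<inter> K \<subseteq> GB A B" using XG by auto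
      have c: "mul A k y = mul A y k" if "k \<in> K" for k y
      proof -
        have "mul A (bang A k) y = mul A y (bang A k)" using H Eq_bang_e by simp
        then show ?thesis using kf[OF that] by simp
      qed
      have "smul (mul A) (X \<inter> K) Y = smul (mul A) Y (X \<inter> K)"
      proof (intro equalityI subsetI)
        fix z assume "z \<in> smul (mul A) (X \<inter> K) Y"
        then obtain k y where z: "z = mul A k y" "k \<in> X \<inter> K" "y \<in> Y" by blast
        then have "z = mul A y k" using c[of k y] by simp
        then show "z \<in> smul (mul A) Y (X \<inter> K)" using z(2,3) by blast
      next
        fix z assume "z \<in> smul (mul A) Y (X \<inter> K)"
        then obtain k y where z: "z = mul A y k" "k \<in> X \<inter> K" "y \<in> Y" by blast
        then have "z = mul A k y" using c[of k y] by simp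
        then show "z \<in> smul (mul A) (X \<inter> K) Y" using z(2,3) by blast
      qed
      then show "g (smul (mul A) (g (X \<inter> K)) Y) = g (smul (mul A) Y (g (X \<inter> K)))"
        using ml[OF IG YG] mr[OF IG YG] by simp
    qed
  next
    case Eq_bang_a1
    show ?thesis unfolding Eq_bang_a1 eq_holds.simps Fm Fb
    proof (intro ballI)
      fix X Y W assume X: "X \<in> Fclosed (GB A B) (TB A B) (NB A)" and Y: "Y \<in> Fclosed (GB A B) (TB A B) (NB A)"
        and W: "W \<in> Fclosed (GB A B) (TB A B) (NB A)"
      note XG = Cl(1)[OF X] and YG = Cl(1)[OF Y] and WG = Cl(1)[OF W]
      have IG: "X \<inter> K \<subseteq> GB A B" using XG by auto
      have c: "mul A k (mul A y w) = mul A (mul A k y) w" if "k \<in> K" for k y w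
      proof -
        have "mul A (bang A k) (mul A y w) = mul A (mul A (bang A k) y) w" using H Eq_bang_a1 by simp
        then show ?thesis using kf[OF that] by simp
      qed
      have e: "smul (mul A) (X \<inter> K) (smul (mul A) Y W) = smul (mul A) (smul (mul A) (X \<inter> K) Y) W"
      proof (intro equalityI subsetI)
        fix z assume "z \<in> smul (mul A) (X \<inter> K) (smul (mul A) Y W)"
        then obtain k y w where z: "z = mul A k (mul A y w)" "k \<in> X \<inter> K" "y \<in> Y" "w \<in> W" by blast
        then have "z = mul A (mul A k y) w" using c by auto
        then show "z \<in> smul (mul A) (smul (mul A) (X \<inter> K) Y) W" using z(2-4) by blast
      next
        fix z assume "z \<in> smul (mul A) (smul (mul A) (X \<inter> K) Y) W"
        then obtain k y w where z: "z = mul A (mul A k y) w" "k \<in> X \<inter> K" "y \<in> Y" "w \<in> W" by blast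
        then have "z = mul A k (mul A y w)" using c by auto
        then show "z \<in> smul (mul A) (X \<inter> K) (smul (mul A) Y W)" using z(2-4) by blast
      qed
      have "g (smul (mul A) (g (X \<inter> K)) (g (smul (mul A) Y W)))
          = g (smul (mul A) (X \<inter> K) (smul (mul A) Y W))"
        using ml[OF IG gsub] mr[OF ss[OF YG WG] IG] by simp
      moreover have "g (smul (mul A) (g (smul (mul A) (g (X \<inter> K)) Y)) W)
          = g (smul (mul A) (smul (mul A) (X \<inter> K) Y) W)"
        using ml[OF IG YG] ml[OF ss[OF IG YG] WG] by simp
      ultimately show "g (smul (mul A) (g (X \<inter> K)) (g (smul (mul A) Y W))) =
           g (smul (mul A) (g (smul (mul A) (g (X \<inter> K)) Y)) W)" using e by simp
    qed
  next
    case Eq_bang_a2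
    show ?thesis unfolding Eq_bang_a2 eq_holds.simps Fm Fb
    proof (intro ballI)
      fix X Y W assume X: "X \<in> Fclosed (GB A B) (TB A B) (NB A)" and Y: "Y \<in> Fclosed (GB A B) (TB A B) (NB A)"
        and W: "W \<in> Fclosed (GB A B) (TB A B) (NB A)"
      note XG = Cl(1)[OF X] and YG = Cl(1)[OF Y] and WG = Cl(1)[OF W]
      have IG: "W \<inter> K \<subseteq> GB A B" using WG by auto
      have c: "mul A x (mul A y k) = mul A (mul A x y) k" if "k \<in> K" for k y x
      proof -
        have "mul A x (mul A y (bang A k)) = mul A (mul A x y) (bang A k)" using H Eq_bang_a2 by simp
        then show ?thesis using kf[OF that] by simp
      qed
      have e: "smul (mul A) X (smul (mul A) Y (W \<inter> K)) = smul (mul A) (smul (mul A) X Y) (W \<inter> K)"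
      proof (intro equalityI subsetI)
        fix z assume "z \<in> smul (mul A) X (smul (mul A) Y (W \<inter> K))"
        then obtain x y k where z: "z = mul A x (mul A y k)" "x \<in> X" "y \<in> Y" "k \<in> W \<inter> K" by blast
        then have "z = mul A (mul A x y) k" using c by auto
        then show "z \<in> smul (mul A) (smul (mul A) X Y) (W \<inter> K)" using z(2-4) by blast
      next
        fix z assume "z \<in> smul (mul A) (smul (mul A) X Y) (W \<inter> K)"
        then obtain x y k where z: "z = mul A (mul A x y) k" "x \<in> X" "y \<in> Y" "k \<in> W \<inter> K" by blast
        then have "z = mul A x (mul A y k)" using c by auto
        then show "z \<in> smul (mul A) X (smul (mul A) Y (W \<inter> K))" using z(2-4) by blast
      qed
      have "g (smul (mul A) X (g (smul (mul A) Y (g (W \<inter> K)))))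
          = g (smul (mul A) X (smul (mul A) Y (W \<inter> K)))"
        using mr[OF IG YG] mr[OF ss[OF YG IG] XG] by simp
      moreover have "g (smul (mul A) (g (smul (mul A) X Y)) (g (W \<inter> K)))
          = g (smul (mul A) (smul (mul A) X Y) (W \<inter> K))"
        using ml[OF ss[OF XG YG] gsub] mr[OF IG ss[OF XG YG]] by simp
      ultimately show "g (smul (mul A) X (g (smul (mul A) Y (g (W \<inter> K))))) =
           g (smul (mul A) (g (smul (mul A) X Y)) (g (W \<inter> K)))" using e by simp
    qed
  qed
qed

end
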